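(* Let $(X,d)$ be a separable complete metric space, $\phi:X\times X\to[0,\infty)$ a Carath\'eodory distance, $(T,\mathsf{T},\mu)$ a $\sigma$-finite measure space and $h:T\times X\to[0,\infty]$ a Carath\'eodory function (measurable in $t$, continuous in $x$); set $F(z):=\int h(t,z)\,d\mu(t)$ and assume $\mathrm{zer}F:=\{z\mid F(z)=0\}$ is non-empty. Let $\tau,\sigma:[0,\infty)\to[0,\infty)$ be nondecreasing with $\tau(0)=\sigma(0)=0$ and $\tau(\varepsilon),\sigma(\varepsilon)>0$ for $\varepsilon>0$. Suppose that for all $x\in X$, \[\mu\big(\{t\in T\mid h(t,x)\ge\tau(\mathrm{dist}^\phi_{\mathrm{zer}F}(x))\}\big)\ge\sigma(\mathrm{dist}^\phi_{\mathrm{zer}F}(x)).\] Then $(\sigma\cdot\tau)(\varepsilon):=\sigma(\varepsilon)\tau(\varepsilon)$ is a modulus of $\phi$-regularity for $F$. Moreover, if $\tau$ and $\sigma$ are convex and $D$ is a collection of $X$-valued random variables (on some probability space) such that $\mathrm{dist}^\phi_{\mathrm{zer}F}(x)$ is integrable for all $x\in D$, then $\sigma\cdot\tau$ is a modulus of $\phi$-regularity for $F$ in mean w.r.t.\ $D$.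
   Context: A Carath\'eodory distance is a function $\phi:X\times X\to[0,\infty)$ continuous in its left argument and Borel measurable in its right argument; $\mathrm{dist}^\phi_S(x):=\inf_{s\in S}\phi(s,x)$. A modulus of $\phi$-regularity for $F$ is a function $\tau:(0,\infty)\to(0,\infty)$ such that for all $\varepsilon>0$ and $x\in X$, $F(x)<\tau(\varepsilon)$ implies $\mathrm{dist}^\phi_{\mathrm{zer}F}(x)<\varepsilon$. A modulus of $\phi$-regularity for $F$ in mean w.r.t.\ $D$ is a function $\tau:(0,\infty)\to(0,\infty)$ such that for all $\varepsilon>0$ and $x\in D$, $\mathbb{E}[F(x)]<\tau(\varepsilon)$ implies $\mathbb{E}[\mathrm{dist}^\phi_{\mathrm{zer}F}(x)]<\varepsilon$. *)

theory Defs
  imports "HOL-Probability.Probability"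
begin

definition distphi :: "('a \<Rightarrow> 'a \<Rightarrow> real) \<Rightarrow> 'a set \<Rightarrow> 'a \<Rightarrow> real" where
  "distphi \<phi> S x = (INF s\<in>S. \<phi> s x)"

definition phi_regularity_modulus ::
  "('a \<Rightarrow> 'a \<Rightarrow> real) \<Rightarrow> ('a \<Rightarrow> ennreal) \<Rightarrow> (real \<Rightarrow> real) \<Rightarrow> bool" where
  "phi_regularity_modulus \<phi> F \<tau> \<longleftrightarrow>
     (\<forall>e>0. \<tau> e > 0) \<and>
     (\<forall>e>0. \<forall>x. F x < ennreal (\<tau> e) \<longrightarrow> distphi \<phi> {z. F z = 0} x < e)"

definition phi_regularity_modulus_mean ::
  "('a \<Rightarrow> 'a \<Rightarrow> real) \<Rightarrow> ('a \<Rightarrow> ennreal) \<Rightarrow> (real \<Rightarrow> real) \<Rightarrow> 'w measure \<Rightarrow> ('w \<Rightarrow> 'a) set \<Rightarrow> bool" where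
  "phi_regularity_modulus_mean \<phi> F \<tau> P D \<longleftrightarrow>
     (\<forall>e>0. \<tau> e > 0) \<and>
     (\<forall>e>0. \<forall>x\<in>D. (\<integral>\<^sup>+ \<omega>. F (x \<omega>) \<partial>P) < ennreal (\<tau> e) \<longrightarrow>
        (\<integral> \<omega>. distphi \<phi> {z. F z = 0} (x \<omega>) \<partial>P) < e)"

end

theory Submission
  imports Defs
begin

theorem lemma3p10:
  fixes \<phi> :: "'a::polish_space \<Rightarrow> 'a \<Rightarrow> real"
    and M :: "'t measure"
    and h :: "'t \<Rightarrow> 'a \<Rightarrow> ennreal"
    and F :: "'a \<Rightarrow> ennreal"
    and \<tau> \<sigma> :: "real \<Rightarrow> real"
  assumes phi_nonneg: "\<And>x y. \<phi> x y \<ge> 0"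
    and phi_cont: "\<And>y. continuous_on UNIV (\<lambda>x. \<phi> x y)"
    and phi_meas: "\<And>x. (\<lambda>y. \<phi> x y) \<in> borel_measurable borel"
    and sigma_finite: "sigma_finite_measure M"
    and h_meas: "\<And>x. (\<lambda>t. h t x) \<in> borel_measurable M"
    and h_cont: "\<And>t. continuous_on UNIV (h t)"
    and F_def: "F = (\<lambda>z. \<integral>\<^sup>+ t. h t z \<partial>M)"
    and zer_ne: "{z. F z = 0} \<noteq> {}"
    and tau_nonneg: "\<And>e. e \<ge> 0 \<Longrightarrow> \<tau> e \<ge> 0"
    and sigma_nonneg: "\<And>e. e \<ge> 0 \<Longrightarrow> \<sigma> e \<ge> 0"
    and tau_mono: "mono_on {0..} \<tau>"
    and sigma_mono: "mono_on {0..} \<sigma>"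
    and tau0: "\<tau> 0 = 0" and sigma0: "\<sigma> 0 = 0"
    and tau_pos: "\<And>e. e > 0 \<Longrightarrow> \<tau> e > 0"
    and sigma_pos: "\<And>e. e > 0 \<Longrightarrow> \<sigma> e > 0"
    and hyp: "\<And>x. emeasure M {t \<in> space M. h t x \<ge> ennreal (\<tau> (distphi \<phi> {z. F z = 0} x))}
                    \<ge> ennreal (\<sigma> (distphi \<phi> {z. F z = 0} x))"
  shows "phi_regularity_modulus \<phi> F (\<lambda>e. \<sigma> e * \<tau> e) \<and>
         (convex_on {0..} \<tau> \<longrightarrow> convex_on {0..} \<sigma> \<longrightarrow>
           (\<forall>(P :: 'w measure) (D :: ('w \<Rightarrow> 'a) set).
              prob_space P \<and> D \<subseteq> borel_measurable P \<and>
              (\<forall>x\<in>D. integrable P (\<lambda>\<omega>. distphi \<phi> {z. F z = 0} (x \<omega>))) \<longrightarrow>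
              phi_regularity_modulus_mean \<phi> F (\<lambda>e. \<sigma> e * \<tau> e) P D))"
proof -
  define Z where "Z = {z. F z = 0}"
  define d where "d = distphi \<phi> Z"
  define g where "g = (\<lambda>e. \<sigma> e * \<tau> e)"
  have d_nonneg: "d y \<ge> 0" for y
    unfolding d_def distphi_def Z_def using zer_ne phi_nonneg by (intro cINF_greatest) auto
  have key: "ennreal (g (d y)) \<le> F y" for y
  proof -
    define A where "A = {t \<in> space M. ennreal (\<tau> (d y)) \<le> h t y}"
    have A: "A \<in> sets M" unfolding A_def using h_meas[of y] by measurable
    have "ennreal (g (d y)) = ennreal (\<tau> (d y)) * ennreal (\<sigma> (d y))"
      unfolding g_def using d_nonneg tau_nonneg sigma_nonneg by (simp add: ennreal_mult mult.commute)
    also have "\<dots> \<le> ennreal (\<tau> (d y)) * emeasure M A"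
      using hyp[of y] unfolding A_def d_def Z_def by (intro mult_left_mono) auto
    also have "\<dots> = (\<integral>\<^sup>+ t. ennreal (\<tau> (d y)) * indicator A t \<partial>M)"
      using A by (simp add: nn_integral_cmult_indicator)
    also have "\<dots> \<le> (\<integral>\<^sup>+ t. h t y \<partial>M)"
      by (intro nn_integral_mono) (auto simp: A_def indicator_def)
    finally show ?thesis using F_def by simp
  qed
  have g_mono: "g a \<le> g b" if "0 \<le> a" "a \<le> b" for a b
    unfolding g_def using that tau_nonneg sigma_nonneg mono_onD[OF tau_mono, of a b] mono_onD[OF sigma_mono, of a b]
    by (intro mult_mono) auto
  have part1: "phi_regularity_modulus \<phi> F (\<lambda>e. \<sigma> e * \<tau> e)"
    unfolding phi_regularity_modulus_def
  proof (intro conjI allI impI)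
    fix e :: real assume "e > 0" then show "\<sigma> e * \<tau> e > 0" using tau_pos sigma_pos by simp
  next
    fix e :: real and x assume e: "e > 0" and Fx: "F x < ennreal (\<sigma> e * \<tau> e)"
    show "distphi \<phi> {z. F z = 0} x < e"
    proof (rule ccontr)
      assume "\<not> ?thesis"
      then have "e \<le> d x" unfolding d_def Z_def by simp
      then have "ennreal (g e) \<le> ennreal (g (d x))" using g_mono e by (simp add: ennreal_leI)
      also have "\<dots> \<le> F x" by (rule key)
      finally show False using Fx unfolding g_def by simp
    qed
  qed
  have part2: "phi_regularity_modulus_mean \<phi> F (\<lambda>e. \<sigma> e * \<tau> e) P D"
    if ct: "convex_on {0..} \<tau>" and cs: "convex_on {0..} \<sigma>" and P: "prob_space P"
      and DI: "\<forall>x\<in>D. integrable P (\<lambda>\<omega>. distphi \<phi> {z. F z = 0} (x \<omega>))"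
    for P :: "'w measure" and D :: "('w \<Rightarrow> 'a) set"
  proof -
    interpret prob_space P by (rule P)
    have gconv: "convex_on {0..} g"
      unfolding g_def using cs ct sigma_mono tau_mono sigma_nonneg tau_nonneg
      by (intro convex_on_mul) auto
    define q where "q = (\<lambda>y. g (max 0 y))"
    have qmono: "mono q" unfolding q_def mono_def using g_mono by auto
    have qmeas: "q \<in> borel_measurable borel" using qmono by (rule borel_measurable_mono)
    have qconv: "convex_on UNIV q"
    proof (rule convex_onI)
      fix t x y :: real assume t: "0 < t" "t < 1"
      have "max 0 ((1 - t) *\<^sub>R x + t *\<^sub>R y) \<le> (1 - t) *\<^sub>R max 0 x + t *\<^sub>R max 0 y"
        using t mult_pos_neg[of t y] mult_pos_neg[of "1-t" x] by (auto simp: max_def mult_left_mono)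
      then have "q ((1 - t) *\<^sub>R x + t *\<^sub>R y) \<le> g ((1 - t) *\<^sub>R max 0 x + t *\<^sub>R max 0 y)"
        unfolding q_def by (intro g_mono) auto
      also have "\<dots> \<le> (1 - t) * g (max 0 x) + t * g (max 0 y)"
        using convex_onD[OF gconv, of t "max 0 x" "max 0 y"] t by auto
      finally show "q ((1 - t) *\<^sub>R x + t *\<^sub>R y) \<le> (1 - t) * q x + t * q y" unfolding q_def .
    qed simp
    show ?thesis
      unfolding phi_regularity_modulus_mean_def
    proof (intro conjI allI impI ballI)
      fix e :: real assume "e > 0" then show "\<sigma> e * \<tau> e > 0" using tau_pos sigma_pos by simp
    next
      fix e :: real and x assume e: "e > 0" and xD: "x \<in> D"
        and Fx: "(\<integral>\<^sup>+ \<omega>. F (x \<omega>) \<partial>P) < ennreal (\<sigma> e * \<tau> e)"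
      define X where "X = (\<lambda>\<omega>. d (x \<omega>))"
      have XI: "integrable P X" using DI xD unfolding X_def d_def Z_def by auto
      have Xnn: "X \<omega> \<ge> 0" for \<omega> unfolding X_def by (rule d_nonneg)
      have qX: "q (X \<omega>) = g (X \<omega>)" for \<omega> unfolding q_def using Xnn[of \<omega>] by simp
      have le1: "(\<integral>\<^sup>+ \<omega>. ennreal (q (X \<omega>)) \<partial>P) \<le> (\<integral>\<^sup>+ \<omega>. F (x \<omega>) \<partial>P)"
        using key qX unfolding X_def by (intro nn_integral_mono) simp
      have qXmeas: "(\<lambda>\<omega>. q (X \<omega>)) \<in> borel_measurable P"
        using measurable_comp[OF borel_measurable_integrable[OF XI] qmeas] by (simp add: o_def)
      have qXnn: "q (X \<omega>) \<ge> 0" for \<omega>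
        unfolding qX g_def using Xnn[of \<omega>] sigma_nonneg tau_nonneg by simp
      have qXI: "integrable P (\<lambda>\<omega>. q (X \<omega>))"
        using qXmeas qXnn le_less_trans[OF le1 less_trans[OF Fx ennreal_less_top]] by (intro integrableI_nonneg) auto
      have J: "q (expectation X) \<le> expectation (\<lambda>\<omega>. q (X \<omega>))"
        by (rule jensens_inequality[OF XI _ _ qXI qconv]) auto
      have nnI: "(\<integral>\<^sup>+ \<omega>. ennreal (q (X \<omega>)) \<partial>P) = ennreal (expectation (\<lambda>\<omega>. q (X \<omega>)))"
        using qXI qXnn by (intro nn_integral_eq_integral) auto
      show "(\<integral> \<omega>. distphi \<phi> {z. F z = 0} (x \<omega>) \<partial>P) < e"
      proof (rule ccontr)
        assume "\<not> ?thesis"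
        then have eE: "e \<le> expectation X" unfolding X_def d_def Z_def by simp
        have "ennreal (g e) \<le> ennreal (q (expectation X))"
          unfolding q_def using eE e g_mono[of e "expectation X"] by (intro ennreal_leI) simp
        also have "\<dots> \<le> ennreal (expectation (\<lambda>\<omega>. q (X \<omega>)))" using J by (rule ennreal_leI)
        also have "\<dots> \<le> (\<integral>\<^sup>+ \<omega>. F (x \<omega>) \<partial>P)" using le1 nnI by simp
        finally show False using Fx unfolding g_def by simp
      qed
    qed
  qed
  show ?thesis using part1 part2 by blast
qed

end
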